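(* Let $\mathcal{L}:\mathbb{R}^d\to\mathbb{R}$ be differentiable on $\mathbb{R}^d\setminus\{\mathbf{0}\}$ and radially invariant. Consider two runs $S$ and $\tilde S$ of the generic optimization scheme $$\mathbf{x}_{k+1}=\mathbf{x}_k-\eta_k\,\mathbf{a}_k\oslash\mathbf{b}_k,\qquad \mathbf{a}_k=\beta\mathbf{a}_{k-1}+\nabla\mathcal{L}(\mathbf{x}_k)+\lambda\mathbf{x}_k$$ (the second with its own $\tilde\eta_k,\tilde\beta,\tilde\lambda,\tilde{\mathbf{b}}_k$, iterates $\tilde{\mathbf{x}}_k$, etc.), with nonzero iterates and $\mathbf{b}_k,\tilde{\mathbf{b}}_k$ having nonzero entries, and for each run define $r_k=\|\mathbf{x}_k\|$, $\mathbf{u}_k=\mathbf{x}_k/r_k$, $\mathbf{c}_k=r_k\mathbf{a}_k\oslash\frac{\mathbf{b}_k}{d^{-1/2}\|\mathbf{b}_k\|}$, $A_k=\frac{\eta_k}{r_k^2 d^{-1/2}\|\mathbf{b}_k\|}$, $\eta^e_k=A_k(1-A_k\langle\mathbf{c}_k,\mathbf{u}_k\rangle)^{-1}$, $\mathbf{c}_k^\perp=\mathbf{c}_k-\langle\mathbf{c}_k,\mathbf{u}_k\rangle\mathbf{u}_k$ (and analogously with tildes). Assume $1-A_k\langle\mathbf{c}_k,\mathbf{u}_k\rangle>0$ and $1-\tilde A_k\langle\tilde{\mathbf{c}}_k,\tilde{\mathbf{u}}_k\rangle>0$ for all $k$. If $\mathbf{u}_0=\tilde{\mathbf{u}}_0$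 and for all $k\ge0$, $\eta^e_k=\tilde\eta^e_k$ and $\mathbf{c}^\perp_k=\tilde{\mathbf{c}}^\perp_k$, then $\mathbf{u}_k=\tilde{\mathbf{u}}_k$ for all $k\ge0$.
   Context: $\oslash$ denotes element-wise division; $\|\cdot\|$ and $\langle\cdot,\cdot\rangle$ are Euclidean. Radially invariant means $\mathcal{L}(\rho\mathbf{x})=\mathcal{L}(\mathbf{x})$ for all $\rho>0$. *)

theory Defs
  imports "HOL-Analysis.Analysis"
begin

definition ediv :: "real^'n \<Rightarrow> real^'n \<Rightarrow> real^'n" where
  "ediv a b = (\<chi> i. a $ i / b $ i)"

definition radially_invariant :: "(real^'n \<Rightarrow> real) \<Rightarrow> bool" where
  "radially_invariant L \<longleftrightarrow> (\<forall>x (\<rho>::real). \<rho> > 0 \<longrightarrow> L (\<rho> *\<^sub>R x) = L x)"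

text \<open>One run of the generic scheme, with gradient field G of L, learning rates eta,
  momentum beta, weight decay lambda, initial momentum a_{-1} = am.\<close>
definition is_run ::
  "(real^'n \<Rightarrow> real^'n) \<Rightarrow> (nat \<Rightarrow> real) \<Rightarrow> real \<Rightarrow> real \<Rightarrow> real^'n
   \<Rightarrow> (nat \<Rightarrow> real^'n) \<Rightarrow> (nat \<Rightarrow> real^'n) \<Rightarrow> (nat \<Rightarrow> real^'n) \<Rightarrow> bool" where
  "is_run G eta beta lam am x a b \<longleftrightarrow>
     (\<forall>k. x (Suc k) = x k - eta k *\<^sub>R ediv (a k) (b k)) \<and>
     a 0 = beta *\<^sub>R am + G (x 0) + lam *\<^sub>R x 0 \<and>
     (\<forall>k. a (Suc k) = beta *\<^sub>R a k + G (x (Suc k)) + lam *\<^sub>R x (Suc k))"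

definition rr :: "(nat \<Rightarrow> real^'n) \<Rightarrow> nat \<Rightarrow> real" where
  "rr x k = norm (x k)"

definition uu :: "(nat \<Rightarrow> real^'n) \<Rightarrow> nat \<Rightarrow> real^'n" where
  "uu x k = (1 / rr x k) *\<^sub>R x k"

definition bscale :: "(nat \<Rightarrow> real^'n) \<Rightarrow> nat \<Rightarrow> real" where
  "bscale b k = (1 / sqrt (real CARD('n))) * norm (b k)"

definition cc :: "(nat \<Rightarrow> real^'n) \<Rightarrow> (nat \<Rightarrow> real^'n) \<Rightarrow> (nat \<Rightarrow> real^'n) \<Rightarrow> nat \<Rightarrow> real^'n" where
  "cc x a b k = rr x k *\<^sub>R ediv (a k) ((1 / bscale b k) *\<^sub>R b k)"

definition AA :: "(nat \<Rightarrow> real) \<Rightarrow> (nat \<Rightarrow> real^'n) \<Rightarrow> (nat \<Rightarrow> real^'n) \<Rightarrow> nat \<Rightarrow> real" where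
  "AA eta x b k = eta k / ((rr x k)\<^sup>2 * bscale b k)"

definition eff_lr :: "(nat \<Rightarrow> real) \<Rightarrow> (nat \<Rightarrow> real^'n) \<Rightarrow> (nat \<Rightarrow> real^'n) \<Rightarrow> (nat \<Rightarrow> real^'n) \<Rightarrow> nat \<Rightarrow> real" where
  "eff_lr eta x a b k = AA eta x b k / (1 - AA eta x b k * (cc x a b k \<bullet> uu x k))"

definition cperp :: "(nat \<Rightarrow> real^'n) \<Rightarrow> (nat \<Rightarrow> real^'n) \<Rightarrow> (nat \<Rightarrow> real^'n) \<Rightarrow> nat \<Rightarrow> real^'n" where
  "cperp x a b k = cc x a b k - (cc x a b k \<bullet> uu x k) *\<^sub>R uu x k"

end

theory Submission
  imports Defs
begin

lemma ediv_scale: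
  fixes a b :: "real^'n"
  assumes "s \<noteq> 0" "\<forall>i. b $ i \<noteq> 0"
  shows "ediv a ((1/s) *\<^sub>R b) = s *\<^sub>R ediv a b"
  using assms unfolding ediv_def by (simp add: vec_eq_iff field_simps)

lemma step_u:
  assumes run: "is_run G eta beta lam am x a b"
    and xnz: "\<forall>k. x k \<noteq> 0"
    and bnz: "\<forall>k i. b k $ i \<noteq> 0"
    and pos: "\<forall>k. 1 - AA eta x b k * (cc x a b k \<bullet> uu x k) > 0"
  shows "uu x (Suc k) = (1 / norm (uu x k - eff_lr eta x a b k *\<^sub>R cperp x a b k)) *\<^sub>R
           (uu x k - eff_lr eta x a b k *\<^sub>R cperp x a b k)"
proof -
  define r where "r = rr x k"
  define s where "s = bscale b k"
  define u where "u = uu x k"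
  define c where "c = cc x a b k"
  define A where "A = AA eta x b k"
  define p where "p = 1 - A * (c \<bullet> u)"
  define w where "w = u - eff_lr eta x a b k *\<^sub>R cperp x a b k"
  have r0: "r > 0" using xnz unfolding r_def rr_def by auto
  have "b k \<noteq> 0" using bnz by (metis zero_index)
  hence s0: "s > 0" unfolding s_def bscale_def by simp
  have p0: "p > 0" using pos unfolding p_def A_def c_def u_def by auto
  have xu: "x k = r *\<^sub>R u" using r0 unfolding u_def uu_def r_def by simp
  have ce: "c = (r * s) *\<^sub>R ediv (a k) (b k)"
    unfolding c_def cc_def using ediv_scale[of s "b k" "a k"] s0 bnz
    by (simp add: s_def r_def)
  have ab: "ediv (a k) (b k) = (1 / (r * s)) *\<^sub>R c" using ce r0 s0 by simp
  have "x (Suc k) = x k - eta k *\<^sub>R ediv (a k) (b k)" using run unfolding is_run_def by blast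
  also have "\<dots> = r *\<^sub>R (u - A *\<^sub>R c)"
    using r0 s0 unfolding xu ab A_def AA_def r_def[symmetric] s_def[symmetric]
    by (simp add: algebra_simps power2_eq_square)
  also have "u - A *\<^sub>R c = p *\<^sub>R w"
  proof -
    have "p * eff_lr eta x a b k = A"
      unfolding eff_lr_def using p0 by (simp add: p_def A_def c_def u_def)
    hence pe: "p * eff_lr eta x a b k = A" .
    have "p *\<^sub>R w = p *\<^sub>R u - (p * eff_lr eta x a b k) *\<^sub>R c
        + ((p * eff_lr eta x a b k) * (c \<bullet> u)) *\<^sub>R u"
      unfolding w_def cperp_def c_def[symmetric] u_def[symmetric]
      by (simp add: scaleR_diff_right algebra_simps)
    also have "\<dots> = (p + A * (c \<bullet> u)) *\<^sub>R u - A *\<^sub>R c"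
      unfolding pe by (simp add: algebra_simps)
    also have "\<dots> = u - A *\<^sub>R c" by (simp add: p_def)
    finally show ?thesis by simp
  qed
  finally have xs: "x (Suc k) = (r * p) *\<^sub>R w" by simp
  have rp: "r * p > 0" using r0 p0 by simp
  show ?thesis unfolding w_def[symmetric] u_def[symmetric]
    unfolding uu_def rr_def xs using r0 p0 by simp
qed

theorem lemma3:
  fixes L :: "real^'n \<Rightarrow> real" and G :: "real^'n \<Rightarrow> real^'n"
    and eta eta' :: "nat \<Rightarrow> real" and beta beta' lam lam' :: real
    and am am' :: "real^'n" and x a b x' a' b' :: "nat \<Rightarrow> real^'n"
  assumes grad: "\<forall>y. y \<noteq> 0 \<longrightarrow> (L has_derivative (\<lambda>h. G y \<bullet> h)) (at y)"
    and rad: "radially_invariant L"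
    and run1: "is_run G eta beta lam am x a b"
    and run2: "is_run G eta' beta' lam' am' x' a' b'"
    and xnz: "\<forall>k. x k \<noteq> 0" and xnz': "\<forall>k. x' k \<noteq> 0"
    and bnz: "\<forall>k i. b k $ i \<noteq> 0" and bnz': "\<forall>k i. b' k $ i \<noteq> 0"
    and pos: "\<forall>k. 1 - AA eta x b k * (cc x a b k \<bullet> uu x k) > 0"
    and pos': "\<forall>k. 1 - AA eta' x' b' k * (cc x' a' b' k \<bullet> uu x' k) > 0"
    and u0: "uu x 0 = uu x' 0"
    and lr: "\<forall>k. eff_lr eta x a b k = eff_lr eta' x' a' b' k"
    and perp: "\<forall>k. cperp x a b k = cperp x' a' b' k"
  shows "\<forall>k. uu x k = uu x' k"
proof
  fix k show "uu x k = uu x' k"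
  proof (induction k)
    case 0 show ?case by (rule u0)
  next
    case (Suc k)
    show ?case
      unfolding step_u[OF run1 xnz bnz pos] step_u[OF run2 xnz' bnz' pos']
      using Suc lr perp by simp
  qed
qed

end
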